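(* Assume $\mu(f)<0$ and (L): for any $\delta,\varepsilon>0$ and compact $K\subset E$ there are $N>0$, $p>0$ such that for all $n\ge N$ and $x\in K$, $\mathbb P^x\{|\frac1{n\delta}\int_0^{n\delta}f(X_s)ds-\mu(f)|>\varepsilon\}\le e^{-pn\delta}$. Then for every $x\in E$ there is $d(x)<0$ such that $$\gamma(x)=\sup_\tau\limsup_{T\to\infty}\mathbb E^x\Big\{\int_0^{\tau\wedge T}\big(f(X_s)-d(x)\big)ds\Big\}<\infty.$$
   Context: $E$ is a locally compact separable metric space in which every closed ball is compact. $(X_t)$ is a right-continuous time-homogeneous (standard) Markov process on $E$ with laws $\mathbb P^x$, expectations $\mathbb E^x$, satisfying the weak Feller property and ergodicity (a unique probability measure $\mu$ with $\|P_t(x,\cdot)-\mu\|_{TV}\to0$ for all $x$); $\mu(f)=\int f\,d\mu$. $f:E\to\mathbb R$ is continuous and bounded. Stopping times may be infinite. *)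

theory Defs
  imports "HOL-Probability.Probability"
begin

text \<open>Total variation distance between two finite measures on the same space
  (sup over measurable sets of the difference; this is half the usual TV norm,
  which does not affect convergence to 0).\<close>
definition tv_dist :: "'a measure \<Rightarrow> 'a measure \<Rightarrow> real" where
  "tv_dist M N = (SUP A \<in> sets M. \<bar>measure M A - measure N A\<bar>)"

definition is_filtration :: "'w measure \<Rightarrow> (real \<Rightarrow> 'w measure) \<Rightarrow> bool" where
  "is_filtration \<Omega> F \<longleftrightarrow>
     (\<forall>t\<ge>0. space (F t) = space \<Omega> \<and> sets (F t) \<subseteq> sets \<Omega>) \<and>
     (\<forall>s t. 0 \<le> s \<longrightarrow> s \<le> t \<longrightarrow> sets (F s) \<subseteq> sets (F t))"

definition stopping_time_on :: "'w measure \<Rightarrow> (real \<Rightarrow> 'w measure) \<Rightarrow> ('w \<Rightarrow> ereal) \<Rightarrow> bool" where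
  "stopping_time_on \<Omega> F \<tau> \<longleftrightarrow>
     (\<forall>\<omega>\<in>space \<Omega>. 0 \<le> \<tau> \<omega>) \<and>
     (\<forall>t\<ge>0. {\<omega>\<in>space \<Omega>. \<tau> \<omega> \<le> ereal t} \<in> sets (F t))"

definition trans_law :: "('a \<Rightarrow> 'w measure) \<Rightarrow> (real \<Rightarrow> 'w \<Rightarrow> 'a::topological_space)
     \<Rightarrow> real \<Rightarrow> 'a \<Rightarrow> 'a measure" where
  "trans_law P X t x = distr (P x) borel (X t)"

definition markov_family ::
  "'w measure \<Rightarrow> (real \<Rightarrow> 'w measure) \<Rightarrow> ('a \<Rightarrow> 'w measure) \<Rightarrow> (real \<Rightarrow> 'w \<Rightarrow> 'a::topological_space) \<Rightarrow> bool" where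
  "markov_family \<Omega> F P X \<longleftrightarrow>
     is_filtration \<Omega> F \<and>
     (\<forall>x. prob_space (P x) \<and> sets (P x) = sets \<Omega>) \<and>
     (\<forall>t\<ge>0. X t \<in> F t \<rightarrow>\<^sub>M borel) \<and>
     (\<forall>\<omega>\<in>space \<Omega>. \<forall>t\<ge>0. continuous (at_right t) (\<lambda>s. X s \<omega>)) \<and>
     (\<forall>x. AE \<omega> in P x. X 0 \<omega> = x) \<and>
     (\<forall>t\<ge>0. \<forall>A\<in>sets borel. (\<lambda>y. measure (P y) {\<omega>\<in>space \<Omega>. X t \<omega> \<in> A}) \<in> borel_measurable borel) \<and>
     (\<forall>x s t A B. 0 \<le> s \<longrightarrow> 0 \<le> t \<longrightarrow> A \<in> sets borel \<longrightarrow> B \<in> sets (F s) \<longrightarrow>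
        measure (P x) ({\<omega>\<in>space \<Omega>. X (s + t) \<omega> \<in> A} \<inter> B) =
        (\<integral>\<omega>. indicator B \<omega> * measure (P (X s \<omega>)) {\<omega>'\<in>space \<Omega>. X t \<omega>' \<in> A} \<partial>P x))"

definition weak_feller :: "('a \<Rightarrow> 'w measure) \<Rightarrow> (real \<Rightarrow> 'w \<Rightarrow> 'a::topological_space) \<Rightarrow> bool" where
  "weak_feller P X \<longleftrightarrow>
     (\<forall>t\<ge>0. \<forall>g::'a \<Rightarrow> real. continuous_on UNIV g \<longrightarrow> bounded (range g) \<longrightarrow>
        continuous_on UNIV (\<lambda>x. \<integral>\<omega>. g (X t \<omega>) \<partial>P x))"

definition ergodic_with :: "('a \<Rightarrow> 'w measure) \<Rightarrow> (real \<Rightarrow> 'w \<Rightarrow> 'a::topological_space) \<Rightarrow> 'a measure \<Rightarrow> bool" where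
  "ergodic_with P X \<mu> \<longleftrightarrow>
     prob_space \<mu> \<and> sets \<mu> = sets borel \<and>
     (\<forall>x. ((\<lambda>t. tv_dist (trans_law P X t x) \<mu>) \<longlongrightarrow> 0) at_top)"

end

theory Submission imports Defs begin

lemma at_Ici_eq: "at (a::real) within {a..} = at_right a"
proof -
  have "{a..} - {a} = {a<..} - {a}" by auto
  then show ?thesis unfolding at_within_def by simp
qed

lemma X_meas_Omega:
  assumes "markov_family \<Omega> F P X" "t \<ge> 0"
  shows "X t \<in> \<Omega> \<rightarrow>\<^sub>M borel"
proof -
  from assms have a: "X t \<in> F t \<rightarrow>\<^sub>M borel" "space (F t) = space \<Omega>" "sets (F t) \<subseteq> sets \<Omega>"
    unfolding markov_family_def is_filtration_def by auto
  then show ?thesis unfolding measurable_def by auto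
qed

lemma Y_meas:
  fixes X :: "real \<Rightarrow> 'w \<Rightarrow> 'a::{metric_space, second_countable_topology}" and f :: "'a \<Rightarrow> real"
  assumes markov: "markov_family \<Omega> F P X" and fc: "continuous_on UNIV f"
  shows "(\<lambda>(\<omega>,s). f (X (max 0 s) \<omega>)) \<in> borel_measurable (\<Omega> \<Otimes>\<^sub>M (lborel::real measure))"
proof -
  have fm[measurable]: "f \<in> borel_measurable borel" using fc by (rule borel_measurable_continuous_onI)
  define q where "q k s = max 0 (real_of_int \<lceil>real (Suc k) * s\<rceil> / real (Suc k))" for k :: nat and s :: real
  have m: "(\<lambda>(\<omega>,s). f (X (q k s) \<omega>)) \<in> borel_measurable (\<Omega> \<Otimes>\<^sub>M (lborel::real measure))" for k
  proof -
    have i: "(\<lambda>(\<omega>,s). f (X (max 0 (real_of_int i / real (Suc k))) \<omega>)) \<in> borel_measurable (\<Omega> \<Otimes>\<^sub>M (lborel::real measure))" for i :: int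
    proof -
      have [measurable]: "X (max 0 (real_of_int i / real (Suc k))) \<in> \<Omega> \<rightarrow>\<^sub>M borel"
        by (rule X_meas_Omega[OF markov]) simp
      show ?thesis by measurable
    qed
    have g: "(\<lambda>(\<omega>,s). \<lceil>real (Suc k) * s\<rceil>) \<in> (\<Omega> \<Otimes>\<^sub>M (lborel::real measure)) \<rightarrow>\<^sub>M count_space UNIV"
      by measurable
    have "(\<lambda>x. (\<lambda>i. (\<lambda>(\<omega>,s). f (X (max 0 (real_of_int i / real (Suc k))) \<omega>))) ((\<lambda>(\<omega>,s). \<lceil>real (Suc k) * s\<rceil>) x) x)
       \<in> borel_measurable (\<Omega> \<Otimes>\<^sub>M (lborel::real measure))"
      by (rule measurable_compose_countable[OF i g])
    then show ?thesis unfolding q_def by (simp add: case_prod_beta)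
  qed
  show ?thesis
  proof (rule borel_measurable_LIMSEQ_real[OF _ m])
    fix z assume z: "z \<in> space (\<Omega> \<Otimes>\<^sub>M (lborel::real measure))"
    obtain \<omega> s where zs: "z = (\<omega>, s)" by (cases z)
    with z have w: "\<omega> \<in> space \<Omega>" by (simp add: space_pair_measure)
    define r where "r k = real_of_int \<lceil>real (Suc k) * s\<rceil> / real (Suc k)" for k
    have r1: "s \<le> r k" for k
    proof -
      have "real (Suc k) * s \<le> real_of_int \<lceil>real (Suc k) * s\<rceil>" by (rule le_of_int_ceiling)
      then show ?thesis unfolding r_def by (simp add: field_simps)
    qed
    have r2: "r k \<le> s + 1 / real (Suc k)" for k
    proof -
      have "real_of_int \<lceil>real (Suc k) * s\<rceil> \<le> real (Suc k) * s + 1" by linarith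
      moreover have "(s + 1 / real (Suc k)) * real (Suc k) = real (Suc k) * s + 1" by (simp add: field_simps)
      ultimately show ?thesis unfolding r_def by (simp add: pos_divide_le_eq del: of_nat_Suc)
    qed
    have "(\<lambda>k. 1 / real (Suc k)) \<longlonglongrightarrow> 0" by (rule LIMSEQ_inverse_real_of_nat[unfolded inverse_eq_divide])
    then have "(\<lambda>k. s + 1 / real (Suc k)) \<longlonglongrightarrow> s" using tendsto_add[of "\<lambda>_. s" s] by force
    then have rl: "r \<longlonglongrightarrow> s"
      using real_tendsto_sandwich[of "\<lambda>_. s" r sequentially "\<lambda>k. s + 1 / real (Suc k)" s] r1 r2 by auto
    have ql: "(\<lambda>k. q k s) \<longlonglongrightarrow> max 0 s"
      unfolding q_def r_def[symmetric] by (intro tendsto_intros rl)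
    have qge: "q k s \<in> {max 0 s..}" for k unfolding q_def r_def[symmetric] using r1[of k] by auto
    have "continuous (at_right (max 0 s)) (\<lambda>t. X t \<omega>)"
      using markov w unfolding markov_family_def by auto
    then have c: "continuous (at (max 0 s) within {max 0 s..}) (\<lambda>t. X t \<omega>)" by (simp add: at_Ici_eq)
    have "(\<lambda>k. X (q k s) \<omega>) \<longlonglongrightarrow> X (max 0 s) \<omega>"
      by (rule continuous_within_tendsto_compose[OF c always_eventually ql]) (use qge in auto)
    then have "(\<lambda>k. f (X (q k s) \<omega>)) \<longlonglongrightarrow> f (X (max 0 s) \<omega>)"
      using fc by (intro continuous_on_tendsto_compose[OF fc]) auto
    then show "(\<lambda>k. (\<lambda>(\<omega>,s). f (X (q k s) \<omega>)) z) \<longlonglongrightarrow> (\<lambda>(\<omega>,s). f (X (max 0 s) \<omega>)) z"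
      by (simp add: zs)
  qed
qed

lemma lbint_le:
  fixes g :: "real \<Rightarrow> real"
  assumes "a \<le> b" "interval_lebesgue_integrable lborel (ereal a) (ereal b) g" "\<And>s. g s \<le> c"
  shows "(LBINT s=ereal a..ereal b. g s) \<le> c * (b - a)"
proof -
  have "(LBINT s=ereal a..ereal b. g s) \<le> (LBINT s=ereal a..ereal b. c)"
    unfolding interval_lebesgue_integral_le_eq[of "ereal a" "ereal b", simplified, OF assms(1)]
  proof (rule set_integral_mono)
    show "set_integrable lborel {a<..<b} g"
      using assms(1,2) by (simp add: interval_lebesgue_integrable_def)
    show "set_integrable lborel {a<..<b} (\<lambda>s. c)"
      using interval_integral_const(1)[of a b c] assms(1)
      by (simp add: interval_lebesgue_integrable_def)
  qed (use assms in auto)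
  then show ?thesis by simp
qed

lemma integrable_aux:
  fixes g :: "real \<Rightarrow> real"
  assumes m: "(\<lambda>s. g (max 0 s)) \<in> borel_measurable lborel" and bd: "\<And>s. \<bar>g s\<bar> \<le> C"
    and "0 \<le> a" "a \<le> b"
  shows "interval_lebesgue_integrable lborel (ereal a) (ereal b) g"
proof -
  have eq: "(\<lambda>s. indicator {a<..<b} s *\<^sub>R g s) = (\<lambda>s. indicator {a<..<b} s *\<^sub>R g (max 0 s))"
    using assms(3) by (auto simp: fun_eq_iff split: split_indicator)
  have "integrable lborel (\<lambda>s. indicator {a<..<b} s *\<^sub>R g s)"
    unfolding eq
  proof (rule integrableI_bounded_set[where A="{a<..<b}" and B=C])
    show "(\<lambda>s. indicator {a<..<b} s *\<^sub>R g (max 0 s)) \<in> borel_measurable lborel"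
      using m by measurable
  qed (use bd assms(4) in \<open>auto split: split_indicator simp: emeasure_lborel_Ioo\<close>)
  then show ?thesis using assms(4)
    by (simp add: interval_lebesgue_integrable_def set_integrable_def)
qed

lemma I_meas:
  fixes X :: "real \<Rightarrow> 'w \<Rightarrow> 'a::{metric_space, second_countable_topology}" and f :: "'a \<Rightarrow> real"
  assumes markov: "markov_family \<Omega> F P X" and fc: "continuous_on UNIV f" and a: "0 \<le> a"
  shows "(\<lambda>\<omega>. LBINT s=ereal 0..ereal a. f (X s \<omega>)) \<in> borel_measurable \<Omega>"
proof -
  have Y[measurable]: "(\<lambda>(\<omega>,s). f (X (max 0 s) \<omega>)) \<in> borel_measurable (\<Omega> \<Otimes>\<^sub>M (lborel::real measure))"
    by (rule Y_meas[OF markov fc])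
  have eq: "(LBINT s=ereal 0..ereal a. f (X s \<omega>)) = (\<integral>s. indicator {0<..<a} s * f (X (max 0 s) \<omega>) \<partial>lborel)" for \<omega>
    unfolding interval_lebesgue_integral_le_eq[of "ereal 0" "ereal a", simplified, OF a] set_lebesgue_integral_def
    by (intro Bochner_Integration.integral_cong) (auto split: split_indicator)
  have "case_prod (\<lambda>\<omega> s. indicator {0<..<a} s * f (X (max 0 s) \<omega>)) \<in> borel_measurable (\<Omega> \<Otimes>\<^sub>M (lborel::real measure))"
  proof -
    have "(\<lambda>z. indicator {0<..<a} (snd z) * (case z of (\<omega>,s) \<Rightarrow> f (X (max 0 s) \<omega>))) \<in> borel_measurable (\<Omega> \<Otimes>\<^sub>M (lborel::real measure))"
      by measurable
    then show ?thesis by (simp add: case_prod_beta)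
  qed
  then have "(\<lambda>\<omega>. \<integral>s. indicator {0<..<a} s * f (X (max 0 s) \<omega>) \<partial>lborel) \<in> borel_measurable \<Omega>"
    by (rule sigma_finite_measure.borel_measurable_lebesgue_integral[OF sigma_finite_lborel])
  then show ?thesis by (simp add: eq)
qed

theorem lemma2p25:
  fixes \<Omega> :: "'w measure" and F :: "real \<Rightarrow> 'w measure"
    and P :: "'a::{metric_space, second_countable_topology} \<Rightarrow> 'w measure"
    and X :: "real \<Rightarrow> 'w \<Rightarrow> 'a" and \<mu> :: "'a measure" and f :: "'a \<Rightarrow> real"
  assumes balls_compact: "\<forall>(x::'a) r. compact (cball x r)"
    and markov: "markov_family \<Omega> F P X"
    and feller: "weak_feller P X"
    and ergodic: "ergodic_with P X \<mu>"
    and f_cont: "continuous_on UNIV f" and f_bdd: "bounded (range f)"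
    and mu_neg: "integral\<^sup>L \<mu> f < 0"
    and L: "\<forall>\<delta>>0. \<forall>\<epsilon>>0. \<forall>K. compact K \<longrightarrow>
              (\<exists>N::nat. \<exists>p::real. N > 0 \<and> p > 0 \<and>
                 (\<forall>n\<ge>N. \<forall>x\<in>K.
                    measure (P x) {\<omega>\<in>space \<Omega>.
                       \<bar>(1 / (real n * \<delta>)) * (LBINT s=ereal 0..ereal (real n * \<delta>). f (X s \<omega>))
                          - integral\<^sup>L \<mu> f\<bar> > \<epsilon>}
                    \<le> exp (- p * real n * \<delta>)))"
  shows "\<forall>x. \<exists>d<0.
           (SUP \<tau>\<in>{\<tau>. stopping_time_on \<Omega> F \<tau>}.
              Limsup at_top (\<lambda>T::real. ereal
                (\<integral>\<omega>. (LBINT s=ereal 0..min (\<tau> \<omega>) (ereal T). f (X s \<omega>) - d) \<partial>P x))) < \<infinity>"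
proof (intro allI)
  fix x
  define m where "m = integral\<^sup>L \<mu> f"
  define d where "d = m / 2"
  define \<epsilon> where "\<epsilon> = - m / 2"
  have m0: "m < 0" using mu_neg by (simp add: m_def)
  have d0: "d < 0" and e0: "\<epsilon> > 0" and md: "m + \<epsilon> = d" using m0 by (auto simp: d_def \<epsilon>_def)
  obtain M where M: "\<And>y. \<bar>f y\<bar> \<le> M"
    using f_bdd unfolding bounded_iff by auto
  have M0: "0 \<le> M" using M[of undefined] by linarith
  define B where "B = M + \<bar>d\<bar>"
  have B0: "0 \<le> B" using M0 by (simp add: B_def)
  have fdB: "\<bar>f y - d\<bar> \<le> B" for y using M[of y] by (simp add: B_def)
  obtain N :: nat and p :: real where N0: "N > 0" and p0: "p > 0" and
    Nb: "\<forall>n\<ge>N. \<forall>y\<in>{x}. measure (P y) {\<omega>\<in>space \<Omega>.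
                       \<bar>(1 / (real n * 1)) * (LBINT s=ereal 0..ereal (real n * 1). f (X s \<omega>))
                          - integral\<^sup>L \<mu> f\<bar> > \<epsilon>} \<le> exp (- p * real n * 1)"
    using L[rule_format, of 1 \<epsilon> "{x}"] e0 by auto
  define E where "E n = (if N \<le> n then {\<omega>\<in>space \<Omega>. \<epsilon> < \<bar>(1 / real n) * (LBINT s=ereal 0..ereal (real n). f (X s \<omega>)) - m\<bar>} else {})" for n
  have Nb': "measure (P x) (E n) \<le> exp (- p * real n)" if "N \<le> n" for n
    using Nb[rule_format, OF that, of x] that by (simp add: E_def m_def)
  interpret px: prob_space "P x" using markov unfolding markov_family_def by auto
  have sets_eq: "sets (P x) = sets \<Omega>" using markov unfolding markov_family_def by auto
  then have space_eq: "space (P x) = space \<Omega>" by (rule sets_eq_imp_space_eq)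
  have Imeas[measurable]: "(\<lambda>\<omega>. LBINT s=ereal 0..ereal (real n). f (X s \<omega>)) \<in> borel_measurable \<Omega>" for n
    by (rule I_meas[OF markov f_cont]) simp
  have Emeas: "E n \<in> sets (P x)" for n
  proof -
    have "{\<omega>\<in>space \<Omega>. \<epsilon> < \<bar>(1 / real n) * (LBINT s=ereal 0..ereal (real n). f (X s \<omega>)) - m\<bar>} \<in> sets \<Omega>"
      by measurable
    then show ?thesis unfolding sets_eq E_def by auto
  qed
  have Eb: "emeasure (P x) (E n) \<le> ennreal (exp (- p * real n))" for n
  proof (cases "N \<le> n")
    case True
    then show ?thesis using Nb'[OF True] by (simp add: px.emeasure_eq_measure ennreal_leI)
  next
    case False
    then show ?thesis by (simp add: E_def)
  qed
  have Gb: "(LBINT s=ereal 0..ereal t. f (X s \<omega>) - d) \<le> B * (real N + 1) + B * real (nat \<lfloor>t\<rfloor>) * indicator (E (nat \<lfloor>t\<rfloor>)) \<omega>"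
    if w: "\<omega> \<in> space \<Omega>" and t0: "0 \<le> t" for \<omega> t
  proof -
    define n where "n = nat \<lfloor>t\<rfloor>"
    have rn: "real n = of_int \<lfloor>t\<rfloor>" using t0 unfolding n_def by simp
    have n1: "real n \<le> t" "t \<le> real n + 1" unfolding rn by linarith+
    have ym: "(\<lambda>s. f (X (max 0 s) \<omega>)) \<in> borel_measurable lborel"
      using measurable_Pair2[OF Y_meas[OF markov f_cont], of \<omega>] w by simp
    have ymd: "(\<lambda>s. f (X (max 0 s) \<omega>) - d) \<in> borel_measurable lborel" using ym by measurable
    have int_fd: "interval_lebesgue_integrable lborel (ereal a) (ereal b) (\<lambda>s. f (X s \<omega>) - d)"
      if "0 \<le> a" "a \<le> b" for a b
      by (rule integrable_aux[of "\<lambda>s. f (X s \<omega>) - d" B]) (use ymd fdB that in auto)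
    have int_f: "interval_lebesgue_integrable lborel (ereal a) (ereal b) (\<lambda>s. f (X s \<omega>))"
      if "0 \<le> a" "a \<le> b" for a b
      by (rule integrable_aux[of "\<lambda>s. f (X s \<omega>)" M]) (use ym M that in auto)
    have mn: "min (ereal 0) (min (ereal (real n)) (ereal t)) = ereal 0"
      "max (ereal 0) (max (ereal (real n)) (ereal t)) = ereal t" using n1 t0 by auto
    have split: "(LBINT s=ereal 0..ereal (real n). f (X s \<omega>) - d) + (LBINT s=ereal (real n)..ereal t. f (X s \<omega>) - d)
        = (LBINT s=ereal 0..ereal t. f (X s \<omega>) - d)"
      by (rule interval_integral_sum) (use int_fd[of 0 t] t0 in \<open>simp only: mn\<close>)
    have "(LBINT s=ereal (real n)..ereal t. f (X s \<omega>) - d) \<le> B * (t - real n)"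
      by (rule lbint_le[OF n1(1) int_fd[OF _ n1(1)]]) (use fdB abs_le_D1 in auto)
    also have "\<dots> \<le> B" using n1 B0 by (simp add: mult_left_le)
    finally have tail: "(LBINT s=ereal (real n)..ereal t. f (X s \<omega>) - d) \<le> B" .
    have head_eq: "(LBINT s=ereal 0..ereal (real n). f (X s \<omega>) - d) = (LBINT s=ereal 0..ereal (real n). f (X s \<omega>)) - d * real n"
      using interval_lebesgue_integral_diff(2)[OF int_f[of 0 "real n"] interval_integral_const(1)[of 0 "real n" d]]
        interval_integral_const(2)[of 0 "real n" d] by simp
    have headM: "(LBINT s=ereal 0..ereal (real n). f (X s \<omega>)) \<le> M * real n"
      using lbint_le[of 0 "real n" "\<lambda>s. f (X s \<omega>)" M] int_f[of 0 "real n"] M abs_le_D1 by auto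
    have head: "(LBINT s=ereal 0..ereal (real n). f (X s \<omega>) - d) \<le> B * real N + B * real n * indicator (E n) \<omega>"
    proof (cases "\<omega> \<in> E n")
      case True
      have "(LBINT s=ereal 0..ereal (real n). f (X s \<omega>) - d) \<le> B * real n"
        unfolding head_eq using headM d0 by (simp add: B_def algebra_simps)
      moreover have "0 \<le> B * real N" using B0 by simp
      ultimately show ?thesis using True by simp
    next
      case False
      show ?thesis
      proof (cases "N \<le> n")
        case True
        then have npos: "real n > 0" using N0 by simp
        from False True w have "\<not> \<epsilon> < \<bar>(1 / real n) * (LBINT s=ereal 0..ereal (real n). f (X s \<omega>)) - m\<bar>"
          by (simp add: E_def)
        then have "(1 / real n) * (LBINT s=ereal 0..ereal (real n). f (X s \<omega>)) \<le> d" using md by linarith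
        then have "(LBINT s=ereal 0..ereal (real n). f (X s \<omega>)) \<le> d * real n"
          using npos by (simp add: field_simps)
        moreover have "0 \<le> B * real N" using B0 by simp
        ultimately show ?thesis unfolding head_eq using False by simp
      next
        case nN: False
        have "(LBINT s=ereal 0..ereal (real n). f (X s \<omega>) - d) \<le> B * real n"
          unfolding head_eq using headM d0 by (simp add: B_def algebra_simps)
        also have "\<dots> \<le> B * real N" using nN B0 by (intro mult_left_mono) auto
        finally show ?thesis using False by simp
      qed
    qed
    show ?thesis using head tail split unfolding n_def[symmetric] by (simp add: algebra_simps)
  qed
  have fin: "(SUP \<tau>\<in>{\<tau>. stopping_time_on \<Omega> F \<tau>}.
              Limsup at_top (\<lambda>T::real. ereal
                (\<integral>\<omega>. (LBINT s=ereal 0..min (\<tau> \<omega>) (ereal T). f (X s \<omega>) - d) \<partial>P x))) < \<infinity>"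
  proof -
    define h where "h \<omega> = ennreal (B * (real N + 1)) + (\<Sum>n. ennreal (B * real n) * indicator (E n) \<omega>)" for \<omega>
    have term_le: "ennreal (B * real k) * indicator (E k) \<omega> \<le> (\<Sum>n. ennreal (B * real n) * indicator (E n) \<omega>)" for k \<omega>
      using ennreal_suminf_lessD[of "\<lambda>n. ennreal (B * real n) * indicator (E n) \<omega>" "ennreal (B * real k) * indicator (E k) \<omega>" k]
      by (auto simp: not_less[symmetric])
    have hG: "ennreal (LBINT s=ereal 0..ereal t. f (X s \<omega>) - d) \<le> h \<omega>" if w: "\<omega> \<in> space \<Omega>" and t0: "0 \<le> t" for \<omega> t
    proof -
      define k where "k = nat \<lfloor>t\<rfloor>"
      have "ennreal (LBINT s=ereal 0..ereal t. f (X s \<omega>) - d) \<le> ennreal (B * (real N + 1) + B * real k * indicator (E k) \<omega>)"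
        using Gb[OF w t0] unfolding k_def by (rule ennreal_leI)
      also have "\<dots> = ennreal (B * (real N + 1)) + ennreal (B * real k) * indicator (E k) \<omega>"
      proof (cases "\<omega> \<in> E k")
        case True
        then show ?thesis using B0 by (simp add: ennreal_plus)
      next
        case False
        then show ?thesis by simp
      qed
      also have "\<dots> \<le> h \<omega>" unfolding h_def by (intro add_left_mono term_le)
      finally show ?thesis .
    qed
    have Em[measurable]: "E n \<in> sets (P x)" for n by (rule Emeas)
    have sumfin: "summable (\<lambda>n. B * real n * exp (- p * real n))"
    proof (rule summable_comparison_test')
      show "summable (\<lambda>n. B * (2 / p) * exp (- p / 2) ^ n)"
        using p0 by (intro summable_mult summable_geometric) simp
      fix n :: nat
      have "1 + p * real n / 2 \<le> exp (p * real n / 2)" by (rule exp_ge_add_one_self)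
      then have a: "real n \<le> (2 / p) * exp (p * real n / 2)" using p0 by (simp add: field_simps)
      have "B * real n * exp (- p * real n) \<le> B * ((2 / p) * exp (p * real n / 2)) * exp (- p * real n)"
        using a B0 by (intro mult_right_mono mult_left_mono) auto
      also have "\<dots> = B * (2 / p) * (exp (p * real n / 2) * exp (- p * real n))" by simp
      also have "exp (p * real n / 2) * exp (- p * real n) = exp (real n * (- p / 2))"
        by (simp add: exp_add[symmetric] field_simps)
      also have "\<dots> = exp (- p / 2) ^ n" by (rule exp_of_nat_mult)
      finally show "norm (B * real n * exp (- p * real n)) \<le> B * (2 / p) * exp (- p / 2) ^ n"
        using B0 by simp
    qed
    have hint: "(\<integral>\<^sup>+\<omega>. h \<omega> \<partial>P x) \<le> ennreal (B * (real N + 1) + (\<Sum>n. B * real n * exp (- p * real n)))"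
    proof -
      have "(\<integral>\<^sup>+\<omega>. h \<omega> \<partial>P x) = (\<integral>\<^sup>+\<omega>. ennreal (B * (real N + 1)) \<partial>P x) + (\<integral>\<^sup>+\<omega>. (\<Sum>n. ennreal (B * real n) * indicator (E n) \<omega>) \<partial>P x)"
        unfolding h_def by (rule nn_integral_add) measurable
      also have "(\<integral>\<^sup>+\<omega>. (\<Sum>n. ennreal (B * real n) * indicator (E n) \<omega>) \<partial>P x) = (\<Sum>n. \<integral>\<^sup>+\<omega>. ennreal (B * real n) * indicator (E n) \<omega> \<partial>P x)"
        by (rule nn_integral_suminf) measurable
      also have "\<dots> = (\<Sum>n. ennreal (B * real n) * emeasure (P x) (E n))"
        by (simp add: nn_integral_cmult_indicator)
      also have "\<dots> \<le> (\<Sum>n. ennreal (B * real n * exp (- p * real n)))"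
      proof (rule suminf_le)
        fix n
        have "ennreal (B * real n) * emeasure (P x) (E n) \<le> ennreal (B * real n) * ennreal (exp (- p * real n))"
          by (rule mult_left_mono[OF Eb]) simp
        then show "ennreal (B * real n) * emeasure (P x) (E n) \<le> ennreal (B * real n * exp (- p * real n))"
          using B0 by (simp add: ennreal_mult'')
      qed auto
      also have "\<dots> = ennreal (\<Sum>n. B * real n * exp (- p * real n))"
        by (rule suminf_ennreal2) (use B0 sumfin in auto)
      finally have "(\<integral>\<^sup>+\<omega>. h \<omega> \<partial>P x) \<le> ennreal (B * (real N + 1)) + ennreal (\<Sum>n. B * real n * exp (- p * real n))"
        by (simp add: px.emeasure_space_1 add_left_mono)
      also have "\<dots> = ennreal (B * (real N + 1) + (\<Sum>n. B * real n * exp (- p * real n)))"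
        using B0 sumfin by (intro ennreal_plus[symmetric]) (auto intro!: suminf_nonneg)
      finally show ?thesis .
    qed
    define C where "C = enn2real (\<integral>\<^sup>+\<omega>. h \<omega> \<partial>P x)"
    have hfin: "(\<integral>\<^sup>+\<omega>. h \<omega> \<partial>P x) \<noteq> top" using hint by (auto simp: top_unique)
    then have hC: "(\<integral>\<^sup>+\<omega>. h \<omega> \<partial>P x) = ennreal C" unfolding C_def by (metis ennreal_enn2real less_top)
    have C0: "0 \<le> C" unfolding C_def by simp
    have gle: "(\<integral>\<omega>. (LBINT s=ereal 0..min (\<tau> \<omega>) (ereal T). f (X s \<omega>) - d) \<partial>P x) \<le> C"
      if st: "stopping_time_on \<Omega> F \<tau>" and T0: "0 \<le> T" for \<tau> T
    proof -
      define g where "g \<omega> = (LBINT s=ereal 0..min (\<tau> \<omega>) (ereal T). f (X s \<omega>) - d)" for \<omega>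
      have gh: "ennreal (g \<omega>) \<le> h \<omega>" if w: "\<omega> \<in> space (P x)" for \<omega>
      proof -
        have w': "\<omega> \<in> space \<Omega>" using w space_eq by simp
        have tau0: "0 \<le> \<tau> \<omega>" using st w' unfolding stopping_time_on_def by auto
        obtain t where t: "min (\<tau> \<omega>) (ereal T) = ereal t" "0 \<le> t"
        proof (cases "\<tau> \<omega>")
          case (real r)
          then show ?thesis using that[of "min r T"] tau0 T0 by auto
        next
          case PInf
          then show ?thesis using that[of T] T0 by auto
        next
          case MInf
          then show ?thesis using tau0 by auto
        qed
        show ?thesis unfolding g_def t(1) by (rule hG[OF w' t(2)])
      qed
      show ?thesis
      proof (cases "integrable (P x) g")
        case True
        have i2: "integrable (P x) (\<lambda>\<omega>. max (g \<omega>) 0)" using True by (intro integrable_max) auto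
        have "integral\<^sup>L (P x) g \<le> integral\<^sup>L (P x) (\<lambda>\<omega>. max (g \<omega>) 0)"
          by (rule integral_mono[OF True i2]) simp
        moreover have "ennreal (integral\<^sup>L (P x) (\<lambda>\<omega>. max (g \<omega>) 0)) = (\<integral>\<^sup>+\<omega>. ennreal (max (g \<omega>) 0) \<partial>P x)"
          by (rule nn_integral_eq_integral[symmetric]) (use i2 in auto)
        moreover have "(\<integral>\<^sup>+\<omega>. ennreal (max (g \<omega>) 0) \<partial>P x) \<le> (\<integral>\<^sup>+\<omega>. h \<omega> \<partial>P x)"
          by (rule nn_integral_mono) (use gh in \<open>simp add: ennreal_max_0\<close>)
        ultimately have "integral\<^sup>L (P x) (\<lambda>\<omega>. max (g \<omega>) 0) \<le> C"
          using C0 hC by (metis ennreal_le_iff)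
        with \<open>integral\<^sup>L (P x) g \<le> _\<close> show ?thesis unfolding g_def by simp
      next
        case False
        then show ?thesis using C0 unfolding g_def[symmetric] by (simp add: not_integrable_integral_eq)
      qed
    qed
    have "(SUP \<tau>\<in>{\<tau>. stopping_time_on \<Omega> F \<tau>}.
              Limsup at_top (\<lambda>T::real. ereal
                (\<integral>\<omega>. (LBINT s=ereal 0..min (\<tau> \<omega>) (ereal T). f (X s \<omega>) - d) \<partial>P x))) \<le> ereal C"
    proof (rule SUP_least)
      fix \<tau> assume "\<tau> \<in> {\<tau>. stopping_time_on \<Omega> F \<tau>}"
      then have st: "stopping_time_on \<Omega> F \<tau>" by simp
      show "Limsup at_top (\<lambda>T::real. ereal
                (\<integral>\<omega>. (LBINT s=ereal 0..min (\<tau> \<omega>) (ereal T). f (X s \<omega>) - d) \<partial>P x)) \<le> ereal C"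
      proof (rule Limsup_bounded)
        show "\<forall>\<^sub>F T in at_top. ereal (\<integral>\<omega>. (LBINT s=ereal 0..min (\<tau> \<omega>) (ereal T). f (X s \<omega>) - d) \<partial>P x) \<le> ereal C"
          using eventually_ge_at_top[of "0::real"] by eventually_elim (use gle[OF st] in simp)
      qed
    qed
    then show ?thesis using le_less_trans[of _ "ereal C" \<infinity>] by auto
  qed
  show "\<exists>d<0.
           (SUP \<tau>\<in>{\<tau>. stopping_time_on \<Omega> F \<tau>}.
              Limsup at_top (\<lambda>T::real. ereal
                (\<integral>\<omega>. (LBINT s=ereal 0..min (\<tau> \<omega>) (ereal T). f (X s \<omega>) - d) \<partial>P x))) < \<infinity>"
    using d0 fin by blast
qed

end
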